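(* Let $k_0>0$, $L>0$, $\alpha\in C^1[0,L]$ and $\mathbf n=(n_1,n_2,n_3)^\top\in C^1([0,L],\mathbb{S}^2)$. Then, for $(k_1,k_2,t)\in\mathcal U$, the Jacobian determinant of $T_\pm$ satisfies $$|\nabla T_\pm(k_1,k_2,t)|=\frac{k_0}{\kappa}\Big|(1-\cos\alpha)\big(n_3\,\mathbf n'\cdot\mathbf h-n_3'\,\mathbf n\cdot\mathbf h\big)-n_3\,\mathbf n\cdot(\mathbf n'\times\mathbf h)\sin\alpha-\alpha'(n_1k_2-n_2k_1)+(\mathbf n\cdot\mathbf h)(n_1n_2'-n_2n_1')\sin\alpha\Big|,$$ where $\mathbf h=(k_1,k_2,\pm\kappa-k_0)^\top$ and $\mathbf n,\mathbf n',\alpha,\alpha'$ are evaluated at $t$. In particular $|\nabla T_\pm|\in L^1(\mathcal U)$.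
   Context: $\mathbb{S}^2$ is the unit sphere in $\mathbb{R}^3$; primes denote derivatives in $t$. For a unit vector $\mathbf n$ and angle $\alpha$, $R_{\mathbf n,\alpha}$ is the rotation with $R_{\mathbf n,\alpha}\mathbf y=(1-\cos\alpha)(\mathbf n\cdot\mathbf y)\mathbf n+\cos\alpha\,\mathbf y-\sin\alpha\,(\mathbf n\times\mathbf y)$. $\kappa=\kappa(k_1,k_2)=\sqrt{k_0^2-k_1^2-k_2^2}$ (positive on $\mathcal U$). $\mathcal U=\{(k_1,k_2,t)\in\mathbb{R}^3:k_1^2+k_2^2<k_0^2,\ 0\le t\le L\}$, $T_\pm:\mathcal U\to\mathbb{R}^3$, $T_\pm(k_1,k_2,t)=R_{\mathbf n(t),\alpha(t)}(k_1,k_2,\pm\kappa-k_0)^\top$, and $|\nabla T_\pm|$ is the absolute value of the determinant of the Jacobian of $T_\pm$ with respect to $(k_1,k_2,t)$. *)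

theory Defs
  imports "HOL-Analysis.Analysis" "HOL-Analysis.Cross3"
begin

definition rot :: "real^3 \<Rightarrow> real \<Rightarrow> real^3 \<Rightarrow> real^3" where
  "rot nv a y = ((1 - cos a) * (nv \<bullet> y)) *\<^sub>R nv + cos a *\<^sub>R y - sin a *\<^sub>R (cross3 nv y)"

text \<open>Points (k1,k2,t) are encoded as x :: real^3 with x$1 = k1, x$2 = k2, x$3 = t.\<close>
definition kap :: "real \<Rightarrow> real^3 \<Rightarrow> real" where
  "kap k0 x = sqrt (k0\<^sup>2 - (x$1)\<^sup>2 - (x$2)\<^sup>2)"

definition UU :: "real \<Rightarrow> real \<Rightarrow> (real^3) set" where
  "UU k0 L = {x. (x$1)\<^sup>2 + (x$2)\<^sup>2 < k0\<^sup>2 \<and> 0 \<le> x$3 \<and> x$3 \<le> L}"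

definition hvec :: "real \<Rightarrow> real \<Rightarrow> real^3 \<Rightarrow> real^3" where
  "hvec k0 s x = vector [x$1, x$2, s * kap k0 x - k0]"

definition Tmap :: "real \<Rightarrow> (real \<Rightarrow> real^3) \<Rightarrow> (real \<Rightarrow> real) \<Rightarrow> real \<Rightarrow> real^3 \<Rightarrow> real^3" where
  "Tmap k0 nf af s x = rot (nf (x$3)) (af (x$3)) (hvec k0 s x)"

end

theory Submission
  imports Defs
begin
definition Rd :: "real^3 \<Rightarrow> real \<Rightarrow> real^3 \<Rightarrow> real \<Rightarrow> real^3 \<Rightarrow> real^3" where
 "Rd N A m a' h = (sin A * a' * (N \<bullet> h)) *\<^sub>R N + ((1 - cos A) * (m \<bullet> h)) *\<^sub>R N
    + ((1 - cos A) * (N \<bullet> h)) *\<^sub>R m - (sin A * a') *\<^sub>R h - (cos A * a') *\<^sub>R cross3 N h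
    - sin A *\<^sub>R cross3 m h"

definition dh :: "real \<Rightarrow> real \<Rightarrow> real^3 \<Rightarrow> real^3 \<Rightarrow> real^3" where
  "dh k0 s x v = vector [v$1, v$2, - s * (x$1 * v$1 + x$2 * v$2) / kap k0 x]"

lemma vec_nth_deriv[derivative_intros]: "((\<lambda>y::real^'n. y$i) has_derivative (\<lambda>v. v$i)) F"
  by (simp add: bounded_linear_vec_nth bounded_linear_imp_has_derivative)

lemma bb_cross3: "bounded_bilinear cross3"
  using bilinear_cross bilinear_conv_bounded_bilinear by blast

lemmas cross3_deriv[derivative_intros] = bounded_bilinear.FDERIV[OF bb_cross3]

lemma hvec_alt: "hvec k0 s y = y$1 *\<^sub>R axis 1 1 + y$2 *\<^sub>R axis 2 1 + (s * kap k0 y - k0) *\<^sub>R axis 3 1"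
  unfolding hvec_def by (simp add: vec_eq_iff forall_3 axis_def vector_3)

lemma kap_deriv:
  assumes "(x$1)\<^sup>2 + (x$2)\<^sup>2 < k0\<^sup>2"
  shows "(kap k0 has_derivative (\<lambda>v. - (x$1 * v$1 + x$2 * v$2) / kap k0 x)) (at x within S)"
proof -
  have pos: "0 < k0\<^sup>2 - (x$1)\<^sup>2 - (x$2)\<^sup>2" using assms by simp
  have d: "((\<lambda>y::real^3. k0\<^sup>2 - (y$1)\<^sup>2 - (y$2)\<^sup>2) has_derivative
     (\<lambda>v. - (2 * x$1 * v$1) - 2 * x$2 * v$2)) (at x within S)"
    by (rule has_derivative_eq_rhs[OF has_derivative_diff[OF has_derivative_diff[OF has_derivative_const
         has_derivative_power[OF vec_nth_deriv]] has_derivative_power[OF vec_nth_deriv]]])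
       (simp add: fun_eq_iff)
  have "(kap k0 has_derivative (\<lambda>v. (- (2 * x$1 * v$1) - 2 * x$2 * v$2) * (inverse (sqrt (k0\<^sup>2 - (x$1)\<^sup>2 - (x$2)\<^sup>2)) / 2))) (at x within S)"
    unfolding kap_def[abs_def] by (rule has_derivative_real_sqrt[OF pos d])
  then show ?thesis
  proof (rule has_derivative_eq_rhs)
    have "sqrt (k0\<^sup>2 - (x$1)\<^sup>2 - (x$2)\<^sup>2) \<noteq> 0" "sqrt (k0\<^sup>2 - ((x$1)\<^sup>2 + (x$2)\<^sup>2)) \<noteq> 0" using pos by auto
    then show "(\<lambda>v. (- (2 * x$1 * v$1) - 2 * x$2 * v$2) * (inverse (sqrt (k0\<^sup>2 - (x$1)\<^sup>2 - (x$2)\<^sup>2)) / 2)) = (\<lambda>v. - (x$1 * v$1 + x$2 * v$2) / kap k0 x)"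
      unfolding kap_def fun_eq_iff by (simp add: field_simps)
  qed
qed

lemma hvec_deriv:
  assumes "(x$1)\<^sup>2 + (x$2)\<^sup>2 < k0\<^sup>2"
  shows "(hvec k0 s has_derivative dh k0 s x) (at x within S)"
proof -
  note kd = kap_deriv[OF assms, of S]
  have "((\<lambda>y. y$1 *\<^sub>R axis 1 1 + y$2 *\<^sub>R axis 2 1 + (s * kap k0 y - k0) *\<^sub>R (axis 3 1 :: real^3)) has_derivative
     (\<lambda>v. v$1 *\<^sub>R axis 1 1 + v$2 *\<^sub>R axis 2 1 + (s * (- (x$1 * v$1 + x$2 * v$2) / kap k0 x) - 0) *\<^sub>R axis 3 1)) (at x within S)"
    by (intro has_derivative_add has_derivative_scaleR_left has_derivative_diff has_derivative_const
          has_derivative_mult_right kd vec_nth_deriv)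
  then show ?thesis
    unfolding hvec_alt[abs_def]
    by (rule has_derivative_eq_rhs) (simp add: fun_eq_iff dh_def vec_eq_iff forall_3 axis_def vector_3 divide_inverse algebra_simps)
qed

lemma rot_deriv:
  fixes x :: "real^3" and H :: "real^3 \<Rightarrow> real^3"
  assumes N: "(N has_derivative (\<lambda>v. v$3 *\<^sub>R m)) (at x within S)"
    and A: "(A has_derivative (\<lambda>v. v$3 * a')) (at x within S)"
    and H: "(H has_derivative H') (at x within S)"
  shows "((\<lambda>y. rot (N y) (A y) (H y)) has_derivative
     (\<lambda>v. rot (N x) (A x) (H' v) + v$3 *\<^sub>R Rd (N x) (A x) m a' (H x))) (at x within S)"
  unfolding rot_def
  apply (rule has_derivative_eq_rhs)
   apply (rule has_derivative_diff)
    apply (rule has_derivative_add)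
     apply (rule has_derivative_scaleR)
      apply (rule has_derivative_mult)
       apply (rule has_derivative_diff)
        apply (rule has_derivative_const)
       apply (rule has_derivative_cos[OF A])
      apply (rule has_derivative_inner[OF N H])
     apply (rule N)
    apply (rule has_derivative_scaleR[OF has_derivative_cos[OF A] H])
   apply (rule has_derivative_scaleR[OF has_derivative_sin[OF A] cross3_deriv[OF N H]])
  apply (unfold fun_eq_iff Rd_def rot_def vec_eq_iff forall_3 cross3_def inner_vec_def sum_3 vector_3
     vector_add_component vector_minus_component vector_scaleR_component real_scaleR_def inner_real_def)
  apply (intro allI conjI)
    apply algebra+
  done

lemma det_cols: "det (matrix (D::real^3\<Rightarrow>real^3)) = cross3 (D (axis 1 1)) (D (axis 2 1)) \<bullet> D (axis 3 1)"
  unfolding matrix_def det_3 cross3_def inner_vec_def sum_3 vector_3 vec_lambda_beta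
  by (simp add: inner_real_def algebra_simps)

lemma UU_approach:
  assumes x: "x \<in> UU k0 L" and L: "L > 0" and i: "i \<in> Basis" and e: "e > 0"
  shows "\<exists>d. 0 < \<bar>d\<bar> \<and> \<bar>d\<bar> < e \<and> x + d *\<^sub>R i \<in> UU k0 L"
proof -
  obtain j where j: "i = axis j 1" using i by (auto simp: Basis_vec_def)
  have x1: "(x$1)\<^sup>2 + (x$2)\<^sup>2 < k0\<^sup>2" and x3: "0 \<le> x$3" "x$3 \<le> L" using x by (auto simp: UU_def)
  define q where "q = k0\<^sup>2 - (x$1)\<^sup>2 - (x$2)\<^sup>2"
  have q: "q > 0" using x1 by (simp add: q_def)
  define \<delta> where "\<delta> = min (e/2) (sqrt q / 2)"
  have \<delta>: "\<delta> > 0" "\<delta> < e" using q e by (auto simp: \<delta>_def)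
  have \<delta>2: "\<delta>\<^sup>2 < q"
  proof -
    have "\<delta> \<le> sqrt q / 2" by (simp add: \<delta>_def)
    then have "\<delta>\<^sup>2 \<le> (sqrt q / 2)\<^sup>2" using \<delta> by (intro power_mono) auto
    also have "\<dots> = q / 4" using q by (simp add: power_divide)
    finally show ?thesis using q by simp
  qed
  consider "j = 1" | "j = 2" | "j = 3" using exhaust_3 by blast
  then show ?thesis
  proof cases
    case 1
    define d where "d = (if x$1 \<le> 0 then \<delta> else - \<delta>)"
    have "(x$1 + d)\<^sup>2 + (x$2)\<^sup>2 < k0\<^sup>2"
    proof -
      have "x$1 * d \<le> 0" by (auto simp: d_def \<delta> mult_nonpos_nonneg less_imp_le mult_nonneg_nonpos)
      moreover have "d\<^sup>2 = \<delta>\<^sup>2" by (simp add: d_def)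
      ultimately show ?thesis using \<delta>2 unfolding q_def by (simp add: power2_sum)
    qed
    then have "x + d *\<^sub>R i \<in> UU k0 L" using x3 by (simp add: UU_def j 1 axis_def)
    moreover have "\<bar>d\<bar> = \<delta>" using \<delta> by (simp add: d_def)
    ultimately show ?thesis using \<delta> by metis
  next
    case 2
    define d where "d = (if x$2 \<le> 0 then \<delta> else - \<delta>)"
    have "(x$1)\<^sup>2 + (x$2 + d)\<^sup>2 < k0\<^sup>2"
    proof -
      have "x$2 * d \<le> 0" by (auto simp: d_def \<delta> mult_nonpos_nonneg less_imp_le mult_nonneg_nonpos)
      moreover have "d\<^sup>2 = \<delta>\<^sup>2" by (simp add: d_def)
      ultimately show ?thesis using \<delta>2 unfolding q_def by (simp add: power2_sum)
    qed
    then have "x + d *\<^sub>R i \<in> UU k0 L" using x3 by (simp add: UU_def j 2 axis_def)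
    moreover have "\<bar>d\<bar> = \<delta>" using \<delta> by (simp add: d_def)
    ultimately show ?thesis using \<delta> by metis
  next
    case 3
    show ?thesis
    proof (cases "x$3 < L")
      case True
      define d where "d = min (e/2) (L - x$3)"
      have "d > 0" "d < e" using True e by (auto simp: d_def)
      moreover have "x + d *\<^sub>R i \<in> UU k0 L" using x1 x3 \<open>d > 0\<close>
        by (simp add: UU_def j 3 axis_def d_def)
      ultimately show ?thesis by (metis abs_of_pos)
    next
      case False
      define d where "d = - min (e/2) L"
      have "d < 0" "- d < e" using L e by (auto simp: d_def)
      moreover have "x + d *\<^sub>R i \<in> UU k0 L" using x1 x3 False L e
        by (simp add: UU_def j 3 axis_def d_def)
      ultimately show ?thesis by (metis abs_of_neg neg_0_less_iff_less)
    qed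
  qed
qed

lemma L1:
  assumes "N \<bullet> N = 1"
  shows "cross3 (rot N A u) (rot N A v) = rot N A (cross3 u v)"
proof -
  have c: "(cos A)^2 + (sin A)^2 = 1" by simp
  obtain c s where cs: "c = cos A" "s = sin A" by blast
  have n: "N$1 * N$1 + N$2 * N$2 + N$3 * N$3 = 1" using assms by (simp add: inner_vec_def sum_3)
  show ?thesis unfolding rot_def vec_eq_iff forall_3 cross3_def inner_vec_def sum_3 vector_3
    using n c by (simp add: cs[symmetric] ; algebra)
qed
lemma L2:
  assumes "N \<bullet> N = 1" "N \<bullet> m = 0"
  shows "rot N A h \<bullet> Rd N A m a' h = 0"
proof -
  have c: "(cos A)^2 + (sin A)^2 = 1" by simp
  obtain c s where cs: "c = cos A" "s = sin A" by blast
  have n: "N$1 * N$1 + N$2 * N$2 + N$3 * N$3 = 1" "N$1 * m$1 + N$2 * m$2 + N$3 * m$3 = 0"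
    using assms by (simp_all add: inner_vec_def sum_3)
  show ?thesis unfolding Rd_def rot_def cross3_def inner_vec_def sum_3 vector_3
    using n c by (simp add: cs[symmetric] ; algebra)
qed

lemma L3:
  assumes "N \<bullet> N = 1" "N \<bullet> m = 0"
  shows "rot N A (axis 3 1) \<bullet> Rd N A m a' h = (1 - cos A) * (N$3 * (m \<bullet> h) - m$3 * (N \<bullet> h))
   - N$3 * (N \<bullet> cross3 m h) * sin A - a' * (N$1 * h$2 - N$2 * h$1)
   + (N \<bullet> h) * (N$1 * m$2 - N$2 * m$1) * sin A"
proof -
  have c: "(cos A)^2 + (sin A)^2 = 1" by simp
  obtain c s where cs: "c = cos A" "s = sin A" by blast
  have n: "N$1 * N$1 + N$2 * N$2 + N$3 * N$3 = 1" "N$1 * m$1 + N$2 * m$2 + N$3 * m$3 = 0"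
    using assms by (simp_all add: inner_vec_def sum_3)
  show ?thesis unfolding Rd_def rot_def cross3_def inner_vec_def sum_3 vector_3
    using n c by (simp add: cs[symmetric] axis_def; algebra)
qed

lemma rot_zero: "rot N A 0 = 0"
  by (simp add: rot_def)

lemma rot_lin: "rot N A (c *\<^sub>R (y + k *\<^sub>R z)) = c *\<^sub>R (rot N A y + k *\<^sub>R rot N A z)"
  unfolding rot_def vec_eq_iff forall_3 cross3_def inner_vec_def sum_3 vector_3
  by (simp add: algebra_simps)

lemma pointwise:
  fixes x :: "real^3"
  assumes k0: "k0 > 0" and L: "L > 0" and x: "x \<in> UU k0 L" and s: "s = 1 \<or> s = -1"
    and nd: "(n has_vector_derivative n' (x$3)) (at (x$3) within {0..L})"
    and ad: "(\<alpha> has_real_derivative \<alpha>' (x$3)) (at (x$3) within {0..L})"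
    and nn: "n (x$3) \<bullet> n (x$3) = 1" and nm: "n (x$3) \<bullet> n' (x$3) = 0"
  shows "Tmap k0 n \<alpha> s differentiable (at x within UU k0 L) \<and>
            \<bar>det (jacobian (Tmap k0 n \<alpha> s) (at x within UU k0 L))\<bar> =
              k0 / kap k0 x *
              \<bar>(1 - cos (\<alpha> (x$3))) * ((n (x$3))$3 * (n' (x$3) \<bullet> hvec k0 s x)
                                        - (n' (x$3))$3 * (n (x$3) \<bullet> hvec k0 s x))
               - (n (x$3))$3 * (n (x$3) \<bullet> (cross3 (n' (x$3)) (hvec k0 s x))) * sin (\<alpha> (x$3))
               - \<alpha>' (x$3) * ((n (x$3))$1 * x$2 - (n (x$3))$2 * x$1)
               + (n (x$3) \<bullet> hvec k0 s x) * ((n (x$3))$1 * (n' (x$3))$2 - (n (x$3))$2 * (n' (x$3))$1)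
                 * sin (\<alpha> (x$3))\<bar>"
proof -
  define t where "t = x$3"
  define N where "N = n t"
  define A where "A = \<alpha> t"
  define m where "m = n' t"
  define a' where "a' = \<alpha>' t"
  define h where "h = hvec k0 s x"
  define \<kappa> where "\<kappa> = kap k0 x"
  have x1: "(x$1)\<^sup>2 + (x$2)\<^sup>2 < k0\<^sup>2" and t: "t \<in> {0..L}" using x by (auto simp: UU_def t_def)
  have \<kappa>: "\<kappa> > 0" using x1 by (simp add: \<kappa>_def kap_def)
  have \<kappa>2: "\<kappa>\<^sup>2 = k0\<^sup>2 - (x$1)\<^sup>2 - (x$2)\<^sup>2" using x1 by (simp add: \<kappa>_def kap_def)
  have img: "(\<lambda>y::real^3. y$3) ` UU k0 L \<subseteq> {0..L}" by (auto simp: UU_def)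
  have nD: "((\<lambda>y::real^3. n (y$3)) has_derivative (\<lambda>v. v$3 *\<^sub>R m)) (at x within UU k0 L)"
  proof -
    have "(n has_derivative (\<lambda>u. u *\<^sub>R m)) (at ((\<lambda>y::real^3. y$3) x) within (\<lambda>y::real^3. y$3) ` UU k0 L)"
      using nd img unfolding has_vector_derivative_def m_def t_def
      by (rule has_derivative_subset)
    from diff_chain_within[OF vec_nth_deriv this] show ?thesis by (simp add: o_def)
  qed
  have aD: "((\<lambda>y::real^3. \<alpha> (y$3)) has_derivative (\<lambda>v. v$3 * a')) (at x within UU k0 L)"
  proof -
    have "(\<alpha> has_derivative (\<lambda>u. a' * u)) (at ((\<lambda>y::real^3. y$3) x) within (\<lambda>y::real^3. y$3) ` UU k0 L)"
      using ad img unfolding has_field_derivative_def a'_def t_def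
      by (rule has_derivative_subset)
    from diff_chain_within[OF vec_nth_deriv this] show ?thesis by (simp add: o_def mult.commute)
  qed
  have hD: "(hvec k0 s has_derivative dh k0 s x) (at x within UU k0 L)"
    using hvec_deriv[OF x1] .
  define D where "D = (\<lambda>v. rot N A (dh k0 s x v) + v$3 *\<^sub>R Rd N A m a' h)"
  have TD: "(Tmap k0 n \<alpha> s has_derivative D) (at x within UU k0 L)"
  proof -
    have e: "Tmap k0 n \<alpha> s = (\<lambda>y. rot (n (y$3)) (\<alpha> (y$3)) (hvec k0 s y))"
      by (simp add: fun_eq_iff Tmap_def)
    show ?thesis unfolding e D_def N_def A_def h_def t_def
      using rot_deriv[OF nD aD hD] by simp
  qed
  have diff: "Tmap k0 n \<alpha> s differentiable (at x within UU k0 L)"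
    using TD by (auto simp: differentiable_def)
  have fd: "frechet_derivative (Tmap k0 n \<alpha> s) (at x within UU k0 L) = D"
    using frechet_derivative_works[THEN iffD1, OF diff] TD
    by (rule frechet_derivative_unique_within) (rule UU_approach[OF x L])
  have D1: "D (axis 1 1) = rot N A (vector [1, 0, - s * x$1 / \<kappa>])"
    by (simp add: D_def dh_def axis_def \<kappa>_def)
  have D2: "D (axis 2 1) = rot N A (vector [0, 1, - s * x$2 / \<kappa>])"
    by (simp add: D_def dh_def axis_def \<kappa>_def)
  have D3: "D (axis 3 1) = Rd N A m a' h"
  proof -
    have "dh k0 s x (axis 3 1) = 0" by (simp add: dh_def axis_def vec_eq_iff forall_3 vector_3)
    then show ?thesis by (simp add: D_def rot_zero axis_def)
  qed
  have nn': "N \<bullet> N = 1" "N \<bullet> m = 0" using nn nm by (simp_all add: N_def m_def t_def)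
  have s2: "s * s = 1" using s by auto
  have cr: "cross3 (vector [1, 0, - s * x$1 / \<kappa>]) (vector [0, 1, - s * x$2 / \<kappa>])
       = (s / \<kappa>) *\<^sub>R (h + k0 *\<^sub>R axis 3 1)"
    using \<kappa> s2 by (simp add: cross3_def h_def hvec_def vec_eq_iff forall_3 vector_3 axis_def \<kappa>_def field_simps)
  have "det (jacobian (Tmap k0 n \<alpha> s) (at x within UU k0 L)) = (s / \<kappa>) * (rot N A h \<bullet> Rd N A m a' h + k0 * (rot N A (axis 3 1) \<bullet> Rd N A m a' h))"
    unfolding jacobian_def fd det_cols D1 D2 D3 L1[OF nn'(1)] cr rot_lin
    by (simp add: inner_add_left algebra_simps)
  also have "\<dots> = (s / \<kappa>) * k0 * ((1 - cos A) * (N$3 * (m \<bullet> h) - m$3 * (N \<bullet> h))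
   - N$3 * (N \<bullet> cross3 m h) * sin A - a' * (N$1 * h$2 - N$2 * h$1)
   + (N \<bullet> h) * (N$1 * m$2 - N$2 * m$1) * sin A)"
    unfolding L2[OF nn'] L3[OF nn'] by simp
  finally have "\<bar>det (jacobian (Tmap k0 n \<alpha> s) (at x within UU k0 L))\<bar> = k0 / \<kappa> * \<bar>(1 - cos A) * (N$3 * (m \<bullet> h) - m$3 * (N \<bullet> h))
   - N$3 * (N \<bullet> cross3 m h) * sin A - a' * (N$1 * h$2 - N$2 * h$1)
   + (N \<bullet> h) * (N$1 * m$2 - N$2 * m$1) * sin A\<bar>"
    using s \<kappa> k0 by (auto simp: abs_mult)
  moreover have "h$1 = x$1" "h$2 = x$2" by (simp_all add: h_def hvec_def)
  ultimately show ?thesis using diff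
    by (simp add: N_def A_def m_def a'_def h_def \<kappa>_def t_def)
qed

definition gmap :: "real \<Rightarrow> real^3 \<Rightarrow> real^3" where
  "gmap k0 x = x + (arcsin (x$2 / sqrt (k0\<^sup>2 - (x$1)\<^sup>2)) - x$2) *\<^sub>R axis 2 1"

lemma det_G: "det (matrix (\<lambda>v::real^3. v + (l v - v$2) *\<^sub>R axis 2 1)) = l (axis 2 1)"
  unfolding matrix_def det_3 vec_lambda_beta by (simp add: axis_def)

lemma gmap_deriv:
  assumes x: "x \<in> UU k0 L"
  shows "\<exists>G. (gmap k0 has_derivative G) (at x within UU k0 L) \<and> \<bar>det (matrix G)\<bar> = 1 / kap k0 x"
proof -
  have x1: "(x$1)\<^sup>2 + (x$2)\<^sup>2 < k0\<^sup>2" using x by (simp add: UU_def)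
  define a where "a = sqrt (k0\<^sup>2 - (x$1)\<^sup>2)"
  have pos: "0 < k0\<^sup>2 - (x$1)\<^sup>2" using x1 by (smt (verit) zero_le_power2)
  have a: "a > 0" using pos by (simp add: a_def)
  have a2: "a\<^sup>2 = k0\<^sup>2 - (x$1)\<^sup>2" using pos by (simp add: a_def)
  have "\<bar>x$2\<bar>\<^sup>2 < a\<^sup>2" using x1 a2 by simp
  then have x2a: "\<bar>x$2\<bar> < a" by (rule power_less_imp_less_base) (use a in simp)
  define w where "w = x$2 / a"
  have w1: "-1 < w" "w < 1" using x2a a by (auto simp: w_def field_simps abs_less_iff)
  have "\<exists>W. ((\<lambda>y::real^3. y$2 / sqrt (k0\<^sup>2 - (y$1)\<^sup>2)) has_derivative W) (at x within UU k0 L) \<and> W (axis 2 1) = 1 / a"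
    apply (rule exI, rule conjI)
     apply (rule has_derivative_divide[OF vec_nth_deriv has_derivative_real_sqrt[OF pos
            has_derivative_diff[OF has_derivative_const has_derivative_power[OF vec_nth_deriv]]]])
    using a by (simp_all add: axis_def a_def)
  then obtain W where wD: "((\<lambda>y::real^3. y$2 / sqrt (k0\<^sup>2 - (y$1)\<^sup>2)) has_derivative W) (at x within UU k0 L)"
    and W2: "W (axis 2 1) = 1 / a" by blast
  have wx: "x$2 / sqrt (k0\<^sup>2 - (x$1)\<^sup>2) = w" by (simp add: w_def a_def)
  have gD: "(gmap k0 has_derivative (\<lambda>v. v + (W v * inverse (sqrt (1 - w\<^sup>2)) - v$2) *\<^sub>R axis 2 1)) (at x within UU k0 L)"
    unfolding gmap_def[abs_def]
    apply (rule has_derivative_eq_rhs)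
     apply (rule has_derivative_add[OF has_derivative_ident])
     apply (rule has_derivative_scaleR_left)
     apply (rule has_derivative_diff[OF _ vec_nth_deriv])
     apply (rule has_derivative_arcsin[OF _ _ wD])
    using w1 by (simp_all add: wx)
  have "sqrt (1 - w\<^sup>2) = sqrt (a\<^sup>2 - (x$2)\<^sup>2) / a"
  proof -
    have "1 - w\<^sup>2 = (a\<^sup>2 - (x$2)\<^sup>2) / a\<^sup>2" using a by (simp add: w_def field_simps)
    then show ?thesis using a by (simp add: real_sqrt_divide)
  qed
  also have "a\<^sup>2 - (x$2)\<^sup>2 = k0\<^sup>2 - (x$1)\<^sup>2 - (x$2)\<^sup>2" using a2 by simp
  finally have sw: "sqrt (1 - w\<^sup>2) = kap k0 x / a" by (simp add: kap_def)
  have kp: "kap k0 x > 0" using x1 by (simp add: kap_def)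
  have "det (matrix (\<lambda>v. v + (W v * inverse (sqrt (1 - w\<^sup>2)) - v$2) *\<^sub>R axis 2 1)) = 1 / kap k0 x"
    unfolding det_G W2 sw using a kp by (simp add: field_simps)
  then show ?thesis using gD kp by (intro exI[of _ "(\<lambda>v. v + (W v * inverse (sqrt (1 - w\<^sup>2)) - v$2) *\<^sub>R axis 2 1)"]) simp
qed

lemma UU_leb: "UU k0 L \<in> sets lebesgue"
proof -
  have cn: "continuous_on UNIV (\<lambda>y::real^3. y$i)" for i
    by (intro linear_continuous_on bounded_linear_vec_nth)
  have "UU k0 L = {x. (x$1)\<^sup>2 + (x$2)\<^sup>2 < k0\<^sup>2} \<inter> ({x. 0 \<le> x$3} \<inter> {x. x$3 \<le> L})"
    by (auto simp: UU_def)
  moreover have o: "open {x::real^3. (x$1)\<^sup>2 + (x$2)\<^sup>2 < k0\<^sup>2}"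
    by (rule open_Collect_less[OF continuous_on_add[OF continuous_on_power[OF cn] continuous_on_power[OF cn]] continuous_on_const])
  moreover have c: "closed ({x::real^3. 0 \<le> x$3} \<inter> {x. x$3 \<le> L})"
    by (rule closed_Int[OF closed_Collect_le[OF continuous_on_const cn] closed_Collect_le[OF cn continuous_on_const]])
  ultimately have "UU k0 L \<in> sets borel" by (simp only:) (intro sets.Int borel_open borel_closed o c)
  then have "UU k0 L \<in> sets lborel" by simp
  then show ?thesis by (rule sets_completionI_sets)
qed

lemma z_bnd:
  assumes z: "z \<in> UU k0 L"
  shows "\<bar>z$2 / sqrt (k0\<^sup>2 - (z$1)\<^sup>2)\<bar> < 1"
proof -
  have x1: "(z$1)\<^sup>2 + (z$2)\<^sup>2 < k0\<^sup>2" using z by (simp add: UU_def)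
  have pos: "0 < k0\<^sup>2 - (z$1)\<^sup>2" using x1 zero_le_power2[of "z$2"] by linarith
  define a where "a = sqrt (k0\<^sup>2 - (z$1)\<^sup>2)"
  have a: "a > 0" using pos by (simp add: a_def)
  have a2: "a\<^sup>2 = k0\<^sup>2 - (z$1)\<^sup>2" using pos by (simp add: a_def)
  have "\<bar>z$2\<bar>\<^sup>2 < a\<^sup>2" using x1 a2 by simp
  then have x2a: "\<bar>z$2\<bar> < a" by (rule power_less_imp_less_base) (use a in simp)
  then show ?thesis using a by (simp add: a_def[symmetric] abs_div)
qed

lemma gmap_inj: "inj_on (gmap k0) (UU k0 L)"
proof (rule inj_onI)
  fix x y assume x: "x \<in> UU k0 L" and y: "y \<in> UU k0 L" and e: "gmap k0 x = gmap k0 y"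
  have e1: "x$1 = y$1" using arg_cong[OF e, of "\<lambda>v. v$1"] by (simp add: gmap_def axis_def)
  have e3: "x$3 = y$3" using arg_cong[OF e, of "\<lambda>v. v$3"] by (simp add: gmap_def axis_def)
  have e2: "arcsin (x$2 / sqrt (k0\<^sup>2 - (x$1)\<^sup>2)) = arcsin (y$2 / sqrt (k0\<^sup>2 - (x$1)\<^sup>2))"
    using arg_cong[OF e, of "\<lambda>v. v$2"] e1 by (simp add: gmap_def axis_def)
  have bnd: "\<bar>z$2 / sqrt (k0\<^sup>2 - (z$1)\<^sup>2)\<bar> < 1" "sqrt (k0\<^sup>2 - (z$1)\<^sup>2) > 0" if z: "z \<in> UU k0 L" for z
  proof -
    have x1: "(z$1)\<^sup>2 + (z$2)\<^sup>2 < k0\<^sup>2" using z by (simp add: UU_def)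
    have pos: "0 < k0\<^sup>2 - (z$1)\<^sup>2" using x1 zero_le_power2[of "z$2"] by linarith
    define a where "a = sqrt (k0\<^sup>2 - (z$1)\<^sup>2)"
    have a: "a > 0" using pos by (simp add: a_def)
    have a2: "a\<^sup>2 = k0\<^sup>2 - (z$1)\<^sup>2" using pos by (simp add: a_def)
    have "\<bar>z$2\<bar>\<^sup>2 < a\<^sup>2" using x1 a2 by simp
    then have x2a: "\<bar>z$2\<bar> < a" by (rule power_less_imp_less_base) (use a in simp)
    then show "\<bar>z$2 / sqrt (k0\<^sup>2 - (z$1)\<^sup>2)\<bar> < 1" "sqrt (k0\<^sup>2 - (z$1)\<^sup>2) > 0"
      using a by (simp_all add: a_def[symmetric] abs_div)
  qed
  define q where "q = sqrt (k0\<^sup>2 - (x$1)\<^sup>2)"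
  have bx: "\<bar>x$2 / q\<bar> < 1" using bnd(1)[OF x] by (simp add: q_def)
  have by': "\<bar>y$2 / q\<bar> < 1" using bnd(1)[OF y] e1 by (simp add: q_def)
  have "x$2 / q = sin (arcsin (x$2 / q))" using bx unfolding abs_less_iff by (intro sin_arcsin[symmetric]) linarith+
  also have "\<dots> = sin (arcsin (y$2 / q))" using e2 by (simp add: q_def)
  also have "\<dots> = y$2 / q" using by' unfolding abs_less_iff by (intro sin_arcsin) linarith+
  finally have "x$2 / q = y$2 / q" .
  then have "x$2 = y$2" using bnd(2)[OF x] unfolding q_def by (simp add: field_simps)
  then show "x = y" using e1 e3 by (simp add: vec_eq_iff forall_3)
qed

lemma inv_kap_integrable:
  assumes "L > 0"
  shows "(\<lambda>x. 1 / kap k0 x) absolutely_integrable_on UU k0 L"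
proof -
  have "\<forall>x\<in>UU k0 L. \<exists>G. (gmap k0 has_derivative G) (at x within UU k0 L) \<and> \<bar>det (matrix G)\<bar> = 1 / kap k0 x"
    using gmap_deriv by blast
  then obtain G where G: "\<And>x. x \<in> UU k0 L \<Longrightarrow> (gmap k0 has_derivative G x) (at x within UU k0 L)"
    "\<And>x. x \<in> UU k0 L \<Longrightarrow> \<bar>det (matrix (G x))\<bar> = 1 / kap k0 x"
    by metis
  have diff: "gmap k0 differentiable_on UU k0 L"
    using G(1) by (auto simp: differentiable_on_def differentiable_def)
  have sub: "gmap k0 ` UU k0 L \<subseteq> cbox (\<chi> i. - (\<bar>k0\<bar> + L + 2)) (\<chi> i. \<bar>k0\<bar> + L + 2)"
  proof
    fix y assume "y \<in> gmap k0 ` UU k0 L"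
    then obtain x where x: "x \<in> UU k0 L" and y: "y = gmap k0 x" by blast
    have x1: "(x$1)\<^sup>2 + (x$2)\<^sup>2 < k0\<^sup>2" and x3: "0 \<le> x$3" "x$3 \<le> L" using x by (auto simp: UU_def)
    have "(x$1)\<^sup>2 \<le> k0\<^sup>2" using x1 by (smt (verit) zero_le_power2)
    then have b1: "\<bar>x$1\<bar> \<le> \<bar>k0\<bar>" using abs_le_square_iff by blast
    define z where "z = x$2 / sqrt (k0\<^sup>2 - (x$1)\<^sup>2)"
    have "\<bar>z\<bar> < 1" unfolding z_def by (rule z_bnd[OF x])
    then have "- (pi/2) \<le> arcsin z \<and> arcsin z \<le> pi/2" by (intro arcsin_bounded) auto
    then have "\<bar>arcsin z\<bar> \<le> 2" using pi_less_4 by linarith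
    then show "y \<in> cbox (\<chi> i. - (\<bar>k0\<bar> + L + 2)) (\<chi> i. \<bar>k0\<bar> + L + 2)"
      using b1 x3 \<open>L > 0\<close> unfolding mem_box_cart y
      by (auto simp: gmap_def axis_def forall_3 z_def[symmetric] abs_le_iff)
  qed
  have "gmap k0 ` UU k0 L \<in> lmeasurable"
    by (intro bounded_set_imp_lmeasurable bounded_subset[OF bounded_cbox sub]
        differentiable_image_in_sets_lebesgue UU_leb diff) simp
  then have "(\<lambda>x. \<bar>det (matrix (G x))\<bar>) absolutely_integrable_on UU k0 L"
    using measurable_differentiable_image_alt[OF UU_leb G(1) gmap_inj] by blast
  then show ?thesis
    by (rule absolutely_integrable_spike[OF _ negligible_empty]) (simp add: G(2))
qed

definition FF :: "real \<Rightarrow> real \<Rightarrow> (real \<Rightarrow> real^3) \<Rightarrow> (real \<Rightarrow> real^3) \<Rightarrow> (real \<Rightarrow> real) \<Rightarrow> (real \<Rightarrow> real) \<Rightarrow> real^3 \<Rightarrow> real" where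
  "FF k0 s n n' \<alpha> \<alpha>' x = (1 - cos (\<alpha> (x$3))) * ((n (x$3))$3 * (n' (x$3) \<bullet> hvec k0 s x)
                                        - (n' (x$3))$3 * (n (x$3) \<bullet> hvec k0 s x))
               - (n (x$3))$3 * (n (x$3) \<bullet> (cross3 (n' (x$3)) (hvec k0 s x))) * sin (\<alpha> (x$3))
               - \<alpha>' (x$3) * ((n (x$3))$1 * x$2 - (n (x$3))$2 * x$1)
               + (n (x$3) \<bullet> hvec k0 s x) * ((n (x$3))$1 * (n' (x$3))$2 - (n (x$3))$2 * (n' (x$3))$1)
                 * sin (\<alpha> (x$3))"

lemma cont_nth: "continuous_on S (\<lambda>y::real^'n. y$i)"
  by (intro linear_continuous_on bounded_linear_vec_nth)

lemma cont_kap: "continuous_on S (kap k0)"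
  unfolding kap_def[abs_def]
  by (rule continuous_on_real_sqrt[OF continuous_on_diff[OF continuous_on_diff[OF continuous_on_const
        continuous_on_power[OF cont_nth]] continuous_on_power[OF cont_nth]]])

lemma cont_hvec: "continuous_on S (hvec k0 s)"
  unfolding hvec_alt[abs_def]
  by (rule continuous_on_add[OF continuous_on_add[OF continuous_on_scaleR[OF cont_nth continuous_on_const]
        continuous_on_scaleR[OF cont_nth continuous_on_const]]
        continuous_on_scaleR[OF continuous_on_diff[OF continuous_on_mult[OF continuous_on_const cont_kap] continuous_on_const]
          continuous_on_const]])

lemma FF_integrable:
  assumes k0: "k0 > 0" and L: "L > 0"
    and cn: "continuous_on {0..L} n" and cn': "continuous_on {0..L} n'"
    and ca: "continuous_on {0..L} \<alpha>" and ca': "continuous_on {0..L} \<alpha>'"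
  shows "(\<lambda>x. k0 / kap k0 x * \<bar>FF k0 s n n' \<alpha> \<alpha>' x\<bar>) absolutely_integrable_on UU k0 L"
proof -
  define K where "K = {x::real^3. (x$1)\<^sup>2 + (x$2)\<^sup>2 \<le> k0\<^sup>2 \<and> 0 \<le> x$3 \<and> x$3 \<le> L}"
  have UK: "UU k0 L \<subseteq> K" by (auto simp: UU_def K_def)
  have imgK: "(\<lambda>x::real^3. x$3) ` K \<subseteq> {0..L}" by (auto simp: K_def)
  note c3 = cont_nth[of K 3]
  have cN: "continuous_on K (\<lambda>x. n (x$3))" by (rule continuous_on_compose2[OF cn c3 imgK])
  have cN': "continuous_on K (\<lambda>x. n' (x$3))" by (rule continuous_on_compose2[OF cn' c3 imgK])
  have cA: "continuous_on K (\<lambda>x. \<alpha> (x$3))" by (rule continuous_on_compose2[OF ca c3 imgK])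
  have cA': "continuous_on K (\<lambda>x. \<alpha>' (x$3))" by (rule continuous_on_compose2[OF ca' c3 imgK])
  note ch = cont_hvec[of K k0 s]
  have cF: "continuous_on K (FF k0 s n n' \<alpha> \<alpha>')"
    unfolding FF_def[abs_def]
    by (intro continuous_on_add continuous_on_diff continuous_on_mult continuous_on_const
        continuous_on_cos continuous_on_sin continuous_on_inner continuous_on_component
        continuous_on_cross cN cN' cA cA' ch cont_nth continuous_on_id)
  have "closed K"
  proof -
    have "K = {x::real^3. (x$1)\<^sup>2 + (x$2)\<^sup>2 \<le> k0\<^sup>2} \<inter> ({x. 0 \<le> x$3} \<inter> {x. x$3 \<le> L})"
      by (auto simp: K_def)
    moreover have "closed {x::real^3. (x$1)\<^sup>2 + (x$2)\<^sup>2 \<le> k0\<^sup>2}"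
      by (rule closed_Collect_le[OF continuous_on_add[OF continuous_on_power[OF cont_nth] continuous_on_power[OF cont_nth]] continuous_on_const])
    moreover have "closed ({x::real^3. 0 \<le> x$3} \<inter> {x. x$3 \<le> L})"
      by (rule closed_Int[OF closed_Collect_le[OF continuous_on_const cont_nth] closed_Collect_le[OF cont_nth continuous_on_const]])
    ultimately show ?thesis by (simp only:) (rule closed_Int)
  qed
  moreover have "bounded K"
  proof (rule bounded_subset[OF bounded_cbox])
    show "K \<subseteq> cbox (\<chi> i. - (k0 + L)) (\<chi> i. k0 + L)"
    proof
      fix x assume "x \<in> K"
      then have x1: "(x$1)\<^sup>2 + (x$2)\<^sup>2 \<le> k0\<^sup>2" and x3: "0 \<le> x$3" "x$3 \<le> L" by (auto simp: K_def)
      have "(x$1)\<^sup>2 \<le> k0\<^sup>2" using x1 zero_le_power2[of "x$2"] by linarith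
      then have b1: "\<bar>x$1\<bar> \<le> k0" using k0 power2_le_iff_abs_le[of k0] by simp
      have "(x$2)\<^sup>2 \<le> k0\<^sup>2" using x1 zero_le_power2[of "x$1"] by linarith
      then have b2: "\<bar>x$2\<bar> \<le> k0" using k0 power2_le_iff_abs_le[of k0] by simp
      show "x \<in> cbox (\<chi> i. - (k0 + L)) (\<chi> i. k0 + L)"
        unfolding mem_box_cart using b1 b2 x3 k0 L by (auto simp: forall_3 abs_le_iff)
    qed
  qed
  ultimately have "compact K" by (simp add: compact_eq_bounded_closed)
  then have "bounded (FF k0 s n n' \<alpha> \<alpha>' ` K)" by (intro compact_imp_bounded compact_continuous_image cF)
  then obtain M where M: "M > 0" "\<And>y. y \<in> FF k0 s n n' \<alpha> \<alpha>' ` K \<Longrightarrow> norm y \<le> M"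
    unfolding bounded_pos by blast
  have FM: "\<bar>FF k0 s n n' \<alpha> \<alpha>' x\<bar> \<le> M" if "x \<in> UU k0 L" for x
    using M(2)[of "FF k0 s n n' \<alpha> \<alpha>' x"] that UK by auto
  have kp: "kap k0 x > 0" if "x \<in> UU k0 L" for x
    using that by (simp add: UU_def kap_def)
  have cont: "continuous_on (UU k0 L) (\<lambda>x. k0 / kap k0 x * \<bar>FF k0 s n n' \<alpha> \<alpha>' x\<bar>)"
    by (intro continuous_on_mult continuous_on_divide continuous_on_const cont_kap continuous_on_rabs
        continuous_on_subset[OF cF UK]) (use kp in force)
  have int1: "(\<lambda>x. 1 / kap k0 x) integrable_on UU k0 L"
    using inv_kap_integrable[OF L] by (simp add: absolutely_integrable_on_def)
  then have int2: "(\<lambda>x. (M * k0) * (1 / kap k0 x)) integrable_on UU k0 L"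
    using integrable_on_cmult_left[OF int1, of "M * k0"] by simp
  show ?thesis
  proof (rule measurable_bounded_by_integrable_imp_absolutely_integrable[OF
        continuous_imp_measurable_on_sets_lebesgue[OF cont UU_leb] UU_leb int2])
    fix x assume x: "x \<in> UU k0 L"
    have "norm (k0 / kap k0 x * \<bar>FF k0 s n n' \<alpha> \<alpha>' x\<bar>) = k0 / kap k0 x * \<bar>FF k0 s n n' \<alpha> \<alpha>' x\<bar>"
      using kp[OF x] k0 by simp
    also have "\<dots> \<le> k0 / kap k0 x * M"
      using FM[OF x] kp[OF x] k0 by (intro mult_left_mono) auto
    also have "\<dots> = (M * k0) * (1 / kap k0 x)" by simp
    finally show "norm (k0 / kap k0 x * \<bar>FF k0 s n n' \<alpha> \<alpha>' x\<bar>) \<le> (M * k0) * (1 / kap k0 x)" .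
  qed
qed

theorem lemma4p2:
  fixes k0 L :: real and \<alpha> \<alpha>' :: "real \<Rightarrow> real" and n n' :: "real \<Rightarrow> real^3" and s :: real
  assumes k0: "k0 > 0" and L: "L > 0"
    and \<alpha>_deriv: "\<And>t. t \<in> {0..L} \<Longrightarrow> (\<alpha> has_real_derivative \<alpha>' t) (at t within {0..L})"
    and \<alpha>'_cont: "continuous_on {0..L} \<alpha>'"
    and n_deriv: "\<And>t. t \<in> {0..L} \<Longrightarrow> (n has_vector_derivative n' t) (at t within {0..L})"
    and n'_cont: "continuous_on {0..L} n'"
    and n_sphere: "\<And>t. t \<in> {0..L} \<Longrightarrow> n t \<in> sphere 0 1"
    and s: "s = 1 \<or> s = -1"
  shows "(\<forall>x \<in> UU k0 L.
            Tmap k0 n \<alpha> s differentiable (at x within UU k0 L) \<and>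
            \<bar>det (jacobian (Tmap k0 n \<alpha> s) (at x within UU k0 L))\<bar> =
              k0 / kap k0 x *
              \<bar>(1 - cos (\<alpha> (x$3))) * ((n (x$3))$3 * (n' (x$3) \<bullet> hvec k0 s x)
                                        - (n' (x$3))$3 * (n (x$3) \<bullet> hvec k0 s x))
               - (n (x$3))$3 * (n (x$3) \<bullet> (cross3 (n' (x$3)) (hvec k0 s x))) * sin (\<alpha> (x$3))
               - \<alpha>' (x$3) * ((n (x$3))$1 * x$2 - (n (x$3))$2 * x$1)
               + (n (x$3) \<bullet> hvec k0 s x) * ((n (x$3))$1 * (n' (x$3))$2 - (n (x$3))$2 * (n' (x$3))$1)
                 * sin (\<alpha> (x$3))\<bar>)
         \<and> (\<lambda>x. \<bar>det (jacobian (Tmap k0 n \<alpha> s) (at x within UU k0 L))\<bar>) absolutely_integrable_on UU k0 L"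
proof -
  have nn: "n t \<bullet> n t = 1" if t: "t \<in> {0..L}" for t
    using n_sphere[OF t] by (simp add: power2_norm_eq_inner[symmetric])
  have nm: "n t \<bullet> n' t = 0" if t: "t \<in> {0..L}" for t
  proof -
    have nd: "(n has_derivative (\<lambda>u. u *\<^sub>R n' t)) (at t within cbox 0 L)"
      using n_deriv[OF t] by (simp add: has_vector_derivative_def cbox_interval)
    have d1: "((\<lambda>u. n u \<bullet> n u) has_derivative (\<lambda>h. n t \<bullet> (h *\<^sub>R n' t) + (h *\<^sub>R n' t) \<bullet> n t)) (at t within cbox 0 L)"
      by (rule has_derivative_inner[OF nd nd])
    have d2: "((\<lambda>u. n u \<bullet> n u) has_derivative (\<lambda>h. 0)) (at t within cbox 0 L)"
      by (rule has_derivative_transform_within[OF has_derivative_const[of 1] zero_less_one])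
         (use t nn in \<open>auto simp: cbox_interval\<close>)
    have "(\<lambda>h. n t \<bullet> (h *\<^sub>R n' t) + (h *\<^sub>R n' t) \<bullet> n t) = (\<lambda>h. 0)"
      by (rule frechet_derivative_unique_within_closed_interval[OF _ _ d1 d2])
         (use t L in \<open>auto simp: cbox_interval\<close>)
    then have "n t \<bullet> (1 *\<^sub>R n' t) + (1 *\<^sub>R n' t) \<bullet> n t = 0" by metis
    then show ?thesis by (simp add: inner_commute)
  qed
  have pw: "Tmap k0 n \<alpha> s differentiable (at x within UU k0 L) \<and>
      \<bar>det (jacobian (Tmap k0 n \<alpha> s) (at x within UU k0 L))\<bar> = k0 / kap k0 x * \<bar>FF k0 s n n' \<alpha> \<alpha>' x\<bar>"
    if x: "x \<in> UU k0 L" for x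
  proof -
    have t: "x$3 \<in> {0..L}" using x by (simp add: UU_def)
    show ?thesis
      using pointwise[of k0 L x s n n' \<alpha> \<alpha>', OF k0 L x s n_deriv[OF t] \<alpha>_deriv[OF t] nn[OF t] nm[OF t]]
      unfolding FF_def .
  qed
  have cn: "continuous_on {0..L} n"
    unfolding continuous_on_eq_continuous_within using n_deriv has_vector_derivative_continuous by blast
  have ca: "continuous_on {0..L} \<alpha>"
    unfolding continuous_on_eq_continuous_within using \<alpha>_deriv DERIV_continuous by blast
  have int: "(\<lambda>x. k0 / kap k0 x * \<bar>FF k0 s n n' \<alpha> \<alpha>' x\<bar>) absolutely_integrable_on UU k0 L"
    by (rule FF_integrable[OF k0 L cn n'_cont ca \<alpha>'_cont])
  have "(\<lambda>x. \<bar>det (jacobian (Tmap k0 n \<alpha> s) (at x within UU k0 L))\<bar>) absolutely_integrable_on UU k0 L"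
    by (rule absolutely_integrable_spike[OF int negligible_empty]) (use pw in auto)
  then show ?thesis using pw unfolding FF_def by blast
qed

end
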